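(* Consider $K$ hypotheses $H_{01},\dots,H_{0K}$ with p-values $\mathbf p=(p_1,\dots,p_K)\in[0,1]^K$ satisfying: each $p_k$ is uniform on $[0,1]$ when $H_{0k}$ is true; the p-values are independent; and for each $k$ the alternative parameter set contains a sequence of parameters under which $\mathbb P(p_k<\epsilon)\to1$ for every $\epsilon>0$. Let $\Pi(D)=\int_{[0,1]^K}\sum_{k=1}^K a_k(\mathbf p)D_k(\mathbf p)\,d\mathbf p$ be a power objective whose coefficients $a_k:[0,1]^K\to\mathbb R$ are continuous and strictly decreasing in each coordinate. Let $(\phi_{\mathcal I})_{\emptyset\ne\mathcal I\subseteq[K]}$ be local tests ($\phi_{\mathcal I}:[0,1]^K\to\{0,1\}$, each a valid level-$\alpha$ test of the intersection hypothesis $H_{\mathcal I}=\bigcap_{i\in\mathcal I}H_{0i}$) of a closed testing procedure, with $\phi_{\{k\}}(\mathbf p)=\mathbb I(p_k\le\alpha)$ for all $k$, and let $D_k=\prod_{\mathcal I\ni k}\phi_{\mathcal I}$. Define $$\tilde\phi_{[K]}(\mathbf p)=\mathbb I\Big(\sum_{k=1}^K a_k(\mathbf p)\prod_{\mathcal I\ni k,\ \mathcal I\subsetneq[K]}\phi_{\mathcal I}(\mathbf p)>t_K\Big),$$ where $t_K$ is the smallest constant guaranteeing $\int_{[0,1]^K}\tilde\phi_{[K]}(\mathbf p)\,d\mathbf p\le\alpha$, and let $\tilde D_k=\tilde\phi_{[K]}\prod_{\mathcal I\ni k,\ \mathcal I\subsetneq[K]}\phi_{\mathcal I}$, $k\in[K]$.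 Then: 1. $\tilde D=(\tilde D_1,\dots,\tilde D_K)$ has the highest power $\Pi$ of any procedure based on the local tests $\{\phi_{\mathcal I}:\mathcal I\subsetneq[K]\}$ (i.e., among closed testing procedures using these local tests for all proper subsets together with any valid level-$\alpha$ test of the complete null $H_{[K]}$); in particular $\Pi(\tilde D)\ge\Pi(D)$. 2. If the local tests $(\phi_{\mathcal I})_{\mathcal I\subseteq[K]}$ are monotone, then $\tilde\phi_{[K]}$ and the resulting procedure $\tilde D$ are monotone.
   Context: $[K]=\{1,\dots,K\}$. A local test $\phi_{\mathcal I}$ is a valid level-$\alpha$ test of $H_{\mathcal I}$ if $\mathbb P(\phi_{\mathcal I}=1)\le\alpha$ whenever all $H_{0i}$, $i\in\mathcal I$, are true. In the closed testing procedure, $H_{0k}$ is rejected iff $\prod_{\mathcal I\ni k}\phi_{\mathcal I}(\mathbf p)=1$. A local test is monotone if decreasing any p-value cannot change its value from 1 to 0; a procedure $D$ is monotone if coordinatewise smaller p-value vectors yield coordinatewise larger decision vectors.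
   Formalization: The coefficients $a_k$ are also nonnegative on $[0,1]^K$, some parameter makes every $H_{0k}$ true at once, and $0<\alpha<1$. Apart from conventions, each condition added here is assumed in the paper as well or is needed for the statement above to hold. *)

theory Defs
  imports "HOL-Probability.Probability"
begin

definition cube_set :: "nat \<Rightarrow> (nat \<Rightarrow> real) set" where
  "cube_set K = PiE {1..K} (\<lambda>_. {0..1})"

definition cube :: "nat \<Rightarrow> (nat \<Rightarrow> real) measure" where
  "cube K = PiM {1..K} (\<lambda>_. restrict_space lborel {0..1})"

definition proper_sets_containing :: "nat \<Rightarrow> nat \<Rightarrow> nat set set" where
  "proper_sets_containing K k = {I. I \<subseteq> {1..K} \<and> I \<noteq> {1..K} \<and> k \<in> I}"

definition closed_testing :: "nat \<Rightarrow> (nat set \<Rightarrow> (nat \<Rightarrow> real) \<Rightarrow> bool) \<Rightarrow> nat \<Rightarrow> (nat \<Rightarrow> real) \<Rightarrow> bool" where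
  "closed_testing K \<phi> k p = (\<forall>I. I \<subseteq> {1..K} \<and> k \<in> I \<longrightarrow> \<phi> I p)"

definition power_obj :: "nat \<Rightarrow> (nat \<Rightarrow> (nat \<Rightarrow> real) \<Rightarrow> real) \<Rightarrow> (nat \<Rightarrow> (nat \<Rightarrow> real) \<Rightarrow> bool) \<Rightarrow> real" where
  "power_obj K a D = (\<integral>p. (\<Sum>k\<in>{1..K}. a k p * of_bool (D k p)) \<partial>cube K)"

definition valid_test :: "'t set \<Rightarrow> ('t \<Rightarrow> (nat \<Rightarrow> real) measure) \<Rightarrow> (nat \<Rightarrow> 't \<Rightarrow> bool)
    \<Rightarrow> real \<Rightarrow> nat set \<Rightarrow> ((nat \<Rightarrow> real) \<Rightarrow> bool) \<Rightarrow> bool" where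
  "valid_test \<Theta> P null \<alpha> I \<psi> =
     (\<forall>\<theta>\<in>\<Theta>. (\<forall>i\<in>I. null i \<theta>) \<longrightarrow> measure (P \<theta>) {p \<in> space (P \<theta>). \<psi> p} \<le> \<alpha>)"

definition mono_test :: "nat \<Rightarrow> ((nat \<Rightarrow> real) \<Rightarrow> bool) \<Rightarrow> bool" where
  "mono_test K \<psi> = (\<forall>p\<in>cube_set K. \<forall>q\<in>cube_set K.
      (\<forall>k\<in>{1..K}. q k \<le> p k) \<longrightarrow> \<psi> p \<longrightarrow> \<psi> q)"

definition mono_proc :: "nat \<Rightarrow> (nat \<Rightarrow> (nat \<Rightarrow> real) \<Rightarrow> bool) \<Rightarrow> bool" where
  "mono_proc K D = (\<forall>p\<in>cube_set K. \<forall>q\<in>cube_set K.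
      (\<forall>k\<in>{1..K}. q k \<le> p k) \<longrightarrow> (\<forall>k\<in>{1..K}. D k p \<longrightarrow> D k q))"

definition stat_S :: "nat \<Rightarrow> (nat \<Rightarrow> (nat \<Rightarrow> real) \<Rightarrow> real) \<Rightarrow> (nat set \<Rightarrow> (nat \<Rightarrow> real) \<Rightarrow> bool)
    \<Rightarrow> (nat \<Rightarrow> real) \<Rightarrow> real" where
  "stat_S K a \<phi> p = (\<Sum>k\<in>{1..K}. a k p * of_bool (\<forall>I\<in>proper_sets_containing K k. \<phi> I p))"

definition thr_K :: "nat \<Rightarrow> (nat \<Rightarrow> (nat \<Rightarrow> real) \<Rightarrow> real) \<Rightarrow> (nat set \<Rightarrow> (nat \<Rightarrow> real) \<Rightarrow> bool)
    \<Rightarrow> real \<Rightarrow> real" where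
  "thr_K K a \<phi> \<alpha> = Inf {t. measure (cube K) {p \<in> space (cube K). stat_S K a \<phi> p > t} \<le> \<alpha>}"

definition phi_tilde :: "nat \<Rightarrow> (nat \<Rightarrow> (nat \<Rightarrow> real) \<Rightarrow> real) \<Rightarrow> (nat set \<Rightarrow> (nat \<Rightarrow> real) \<Rightarrow> bool)
    \<Rightarrow> real \<Rightarrow> (nat \<Rightarrow> real) \<Rightarrow> bool" where
  "phi_tilde K a \<phi> \<alpha> p = (stat_S K a \<phi> p > thr_K K a \<phi> \<alpha>)"

definition proc_with :: "nat \<Rightarrow> (nat set \<Rightarrow> (nat \<Rightarrow> real) \<Rightarrow> bool) \<Rightarrow> ((nat \<Rightarrow> real) \<Rightarrow> bool)
    \<Rightarrow> nat \<Rightarrow> (nat \<Rightarrow> real) \<Rightarrow> bool" where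
  "proc_with K \<phi> \<psi> k p = (\<psi> p \<and> (\<forall>I\<in>proper_sets_containing K k. \<phi> I p))"

end

theory Submission
  imports Defs
begin

abbreviation "U01 \<equiv> restrict_space lborel {0..1::real}"

lemma space_cube: "space (cube K) = cube_set K"
  by (simp add: cube_def cube_set_def space_PiM space_restrict_space)

lemma sets_cube: "sets (cube K) = sets (PiM {1..K} (\<lambda>_. U01))"
  by (simp add: cube_def)

lemma coord_meas: "(\<lambda>p. p i) \<in> borel_measurable (cube K)"
proof (cases "i \<in> {1..K}")
  case True
  have "(\<lambda>p. p i) \<in> measurable (cube K) U01"
    unfolding cube_def using True by (rule measurable_component_singleton)
  then show ?thesis by (simp add: measurable_restrict_space2_iff)
next
  case False
  have "(\<lambda>p. p i) \<in> borel_measurable (cube K) \<longleftrightarrow> (\<lambda>p. undefined :: real) \<in> borel_measurable (cube K)"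
    by (rule measurable_cong) (use False in \<open>auto simp: space_cube cube_set_def PiE_def extensional_def\<close>)
  then show ?thesis by simp
qed

lemma cont_meas:
  assumes "continuous_on (cube_set K) f"
  shows "(f :: (nat \<Rightarrow> real) \<Rightarrow> real) \<in> borel_measurable (cube K)"
proof -
  have "(\<lambda>p. p) \<in> borel_measurable (cube K)"
    by (rule measurable_coordinatewise_then_product) (rule coord_meas)
  then have "(\<lambda>p. p) \<in> measurable (cube K) (restrict_space borel (cube_set K))"
    by (intro measurable_restrict_space2) (auto simp: space_cube)
  moreover have "f \<in> borel_measurable (restrict_space borel (cube_set K))"
    by (rule borel_measurable_continuous_on_restrict[OF assms])
  ultimately show ?thesis using measurable_comp by fastforce
qed

lemma sfU: "sigma_finite_measure U01"
  by (intro sigma_finite_measure_restrict_space) (auto intro: lborel.sigma_finite_measure_axioms)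

lemma psf: "product_sigma_finite (\<lambda>_. U01)"
  unfolding product_sigma_finite_def using sfU by simp


lemma psf_unif: "product_sigma_finite (\<lambda>_. uniform_measure lborel {0..1::real})"
proof -
  have "prob_space (uniform_measure lborel {0..1::real})"
    by (intro prob_space_uniform_measure) auto
  then have "sigma_finite_measure (uniform_measure lborel {0..1::real})"
    by (simp add: prob_space_imp_sigma_finite)
  then show ?thesis unfolding product_sigma_finite_def by simp
qed

lemma model_eq_cube:
  assumes K: "K \<ge> 1" and ps: "prob_space M" and sM: "sets M = sets (cube K)"
    and unif: "\<And>k. k \<in> {1..K} \<Longrightarrow> distr M borel (\<lambda>p. p k) = uniform_measure lborel {0..1::real}"
    and ind: "prob_space.indep_vars M (\<lambda>_. borel) (\<lambda>k p. p k) {1..K}"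
  shows "M = cube K"
proof -
  interpret prob_space M by (rule ps)
  let ?I = "{1..K}"
  have spM: "space M = cube_set K" using sets_eq_imp_space_eq[OF sM] space_cube by simp
  have rv: "random_variable borel (\<lambda>p. p k)" for k
    using coord_meas[of k K] measurable_cong_sets[OF sM refl] by blast
  have D: "distr M (PiM ?I (\<lambda>_. borel)) (\<lambda>x. \<lambda>i\<in>?I. x i) = PiM ?I (\<lambda>i. distr M borel (\<lambda>p. p i))"
    using indep_vars_iff_distr_eq_PiM[where I="?I" and M'="\<lambda>_. borel" and X="\<lambda>k p. p k"] K rv ind by auto
  also have "\<dots> = PiM ?I (\<lambda>_. uniform_measure lborel {0..1::real})"
    by (rule PiM_cong) (auto simp: unif)
  finally have D2: "distr M (PiM ?I (\<lambda>_. borel)) (\<lambda>x. \<lambda>i\<in>?I. x i) = PiM ?I (\<lambda>_. uniform_measure lborel {0..1::real})" .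
  have "M = PiM ?I (\<lambda>_. U01)"
  proof (rule product_sigma_finite.PiM_eqI[OF psf])
    show "finite ?I" by simp
    show "sets M = sets (PiM ?I (\<lambda>_. U01))" using sM by (simp add: cube_def)
    fix A assume A: "\<And>i. i \<in> ?I \<Longrightarrow> A i \<in> sets U01"
    have Ab: "A i \<in> sets borel" "A i \<subseteq> {0..1}" if "i \<in> ?I" for i
      using A[OF that] by (auto simp: sets_restrict_space_iff)
    have PEs: "PiE ?I A \<in> sets (PiM ?I (\<lambda>_. borel))"
      using Ab by (auto intro!: sets_PiM_I_finite)
    have meas: "(\<lambda>x. \<lambda>i\<in>?I. x i) \<in> measurable M (PiM ?I (\<lambda>_. borel))"
      using rv by (auto intro!: measurable_PiM_single')
    have pre: "(\<lambda>x. \<lambda>i\<in>?I. x i) -` PiE ?I A \<inter> space M = PiE ?I A"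
    proof -
      have "x = (\<lambda>i\<in>?I. x i)" if "x \<in> space M" for x
        using that by (auto simp: spM cube_set_def PiE_def extensional_def restrict_def)
      moreover have "PiE ?I A \<subseteq> space M"
        unfolding spM cube_set_def using Ab(2) by (intro PiE_mono) auto
      ultimately show ?thesis by auto
    qed
    have "emeasure M (PiE ?I A) = emeasure (distr M (PiM ?I (\<lambda>_. borel)) (\<lambda>x. \<lambda>i\<in>?I. x i)) (PiE ?I A)"
      using emeasure_distr[OF meas PEs] pre by simp
    also have "\<dots> = (\<Prod>i\<in>?I. emeasure (uniform_measure lborel {0..1::real}) (A i))"
      unfolding D2 using Ab by (intro product_sigma_finite.emeasure_PiM[OF psf_unif]) auto
    also have "\<dots> = (\<Prod>i\<in>?I. emeasure U01 (A i))"
    proof (rule prod.cong[OF refl])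
      fix i assume i: "i \<in> ?I"
      have "{0..1::real} \<inter> A i = A i" "A i \<inter> {0..1} = A i" using Ab[OF i] by auto
      then show "emeasure (uniform_measure lborel {0..1::real}) (A i) = emeasure U01 (A i)"
        using Ab[OF i] by (simp add: emeasure_restrict_space divide_ennreal_def)
    qed
    finally show "emeasure M (PiE ?I A) = (\<Prod>i\<in>?I. emeasure U01 (A i))" .
  qed
  then show ?thesis by (simp add: cube_def)
qed


lemma level_null:
  fixes f :: "(nat \<Rightarrow> real) \<Rightarrow> real"
  assumes K: "K \<ge> 1" and fm: "f \<in> borel_measurable (cube K)"
    and dec: "\<And>p x. p \<in> cube_set K \<Longrightarrow> 0 \<le> x \<Longrightarrow> x < p 1 \<Longrightarrow> f (p(1 := x)) > f p"
  shows "emeasure (cube K) {p \<in> space (cube K). f p = c} = 0"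
proof -
  let ?S = "{p \<in> space (cube K). f p = c}"
  have Ss: "?S \<in> sets (cube K)" using fm by measurable
  have ins: "{1..K} = insert 1 {2..K}" "1 \<notin> {2..K::nat}" using K by auto
  have cK: "cube K = PiM (insert 1 {2..K}) (\<lambda>_. U01)" unfolding cube_def using ins by simp
  have "emeasure (cube K) ?S = (\<integral>\<^sup>+ p. indicator ?S p \<partial>cube K)"
    using Ss by simp
  also have "\<dots> = (\<integral>\<^sup>+ x. (\<integral>\<^sup>+ y. indicator ?S (x(1 := y)) \<partial>U01) \<partial>PiM {2..K} (\<lambda>_. U01))"
    unfolding cK
    by (rule product_sigma_finite.product_nn_integral_insert[OF psf])
       (use Ss cK in auto)
  also have "\<dots> = (\<integral>\<^sup>+ x. 0 \<partial>PiM {2..K} (\<lambda>_. U01))"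
  proof (rule nn_integral_cong)
    fix x assume x: "x \<in> space (PiM {2..K} (\<lambda>_. U01))"
    define T where "T = {y \<in> {0..1::real}. x(1 := y) \<in> ?S}"
    have xin: "x(1 := y) \<in> cube_set K" if "y \<in> {0..1}" for y
      using x that ins unfolding cube_set_def
      by (auto simp: space_PiM space_restrict_space PiE_iff extensional_def)
    have sub: "\<exists>y0. T \<subseteq> {y0} \<and> (T \<noteq> {} \<longrightarrow> y0 \<in> T)"
    proof (cases "T = {}")
      case True then show ?thesis by auto
    next
      case False
      then obtain y0 where y0: "y0 \<in> T" by auto
      have "T \<subseteq> {y0}"
      proof
        fix y assume y: "y \<in> T"
        have "\<not> (y1 < y2)" if "y1 \<in> T" "y2 \<in> T" for y1 y2
        proof
          assume lt: "y1 < y2"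
          have p: "x(1 := y2) \<in> cube_set K" using xin that(2) unfolding T_def by auto
          have "f ((x(1 := y2))(1 := y1)) > f (x(1 := y2))"
            using dec[OF p, of y1] lt that(1) unfolding T_def by auto
          then show False using that unfolding T_def by auto
        qed
        then show "y \<in> {y0}" using y y0 by (metis linorder_neqE_linordered_idom singletonI)
      qed
      then show ?thesis using y0 by auto
    qed
    then obtain y0 where y0: "T \<subseteq> {y0}" "T \<noteq> {} \<Longrightarrow> y0 \<in> T" by auto
    have "(\<integral>\<^sup>+ y. indicator ?S (x(1 := y)) \<partial>U01) = (\<integral>\<^sup>+ y. indicator T y \<partial>U01)"
      by (rule nn_integral_cong) (auto simp: T_def space_restrict_space indicator_def)
    also have "\<dots> = 0"
    proof (cases "T = {}")
      case True then show ?thesis by simp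
    next
      case False
      then have T: "T = {y0}" using y0 by auto
      then have y01: "y0 \<in> {0..1}" unfolding T_def by auto
      have "{y0} \<in> sets U01" using y01 by (auto simp: sets_restrict_space_iff)
      then have "(\<integral>\<^sup>+ y. indicator T y \<partial>U01) = emeasure U01 {y0}" unfolding T by simp
      also have "\<dots> = emeasure lborel {y0}" using y01 by (subst emeasure_restrict_space) auto
      finally show ?thesis by simp
    qed
    finally show "(\<integral>\<^sup>+ y. indicator ?S (x(1 := y)) \<partial>U01) = 0" .
  qed
  finally show ?thesis by simp
qed

lemma antitone_coord:
  fixes f :: "(nat \<Rightarrow> real) \<Rightarrow> real"
  assumes dec: "\<And>p j x. p \<in> cube_set K \<Longrightarrow> j \<in> {1..K} \<Longrightarrow> 0 \<le> x \<Longrightarrow> x < p j \<Longrightarrow> f (p(j := x)) > f p"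
    and p: "p \<in> cube_set K" and q: "q \<in> cube_set K" and le: "\<forall>j\<in>{1..K}. q j \<le> p j"
  shows "f q \<ge> f p"
proof -
  define r where "r j = (\<lambda>i. if i \<in> {1..j} then q i else p i)" for j
  have "j \<le> K \<Longrightarrow> r j \<in> cube_set K \<and> f (r j) \<ge> f p" for j
  proof (induction j)
    case 0 then show ?case using p by (simp add: r_def)
  next
    case (Suc j)
    then have IH: "r j \<in> cube_set K" "f (r j) \<ge> f p" by auto
    have eq: "r (Suc j) = (r j)(Suc j := q (Suc j))" by (auto simp: r_def)
    have rin: "r (Suc j) \<in> cube_set K"
      using p q unfolding r_def cube_set_def by (auto simp: PiE_iff extensional_def)
    show ?case
    proof (cases "q (Suc j) < p (Suc j)")
      case True
      have "q (Suc j) \<ge> 0" using q Suc.prems by (auto simp: cube_set_def PiE_iff)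
      moreover have "r j (Suc j) = p (Suc j)" by (simp add: r_def)
      ultimately have "f (r (Suc j)) > f (r j)" unfolding eq
        using dec[OF IH(1), of "Suc j" "q (Suc j)"] True Suc.prems by auto
      then show ?thesis using IH rin by auto
    next
      case False
      then have "q (Suc j) = p (Suc j)" using le Suc.prems by force
      then have "r (Suc j) = r j" unfolding eq by (auto simp: r_def)
      then show ?thesis using IH by auto
    qed
  qed
  moreover have "r K = q"
    using p q unfolding r_def cube_set_def by (auto simp: PiE_iff extensional_def)
  ultimately show ?thesis by auto
qed


lemma thr_facts:
  fixes M :: "'a measure" and S :: "'a \<Rightarrow> real"
  assumes ps: "prob_space M" and Sm: "S \<in> borel_measurable M"
    and nonneg: "\<And>p. p \<in> space M \<Longrightarrow> 0 \<le> S p"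
    and bound: "\<And>p. p \<in> space M \<Longrightarrow> S p \<le> Mx"
    and al: "0 < \<alpha>" "\<alpha> < 1"
    and nullc: "\<And>c. c > 0 \<Longrightarrow> measure M {p \<in> space M. S p = c} = 0"
    and t: "t = Inf {t. measure M {p \<in> space M. S p > t} \<le> \<alpha>}"
  shows "t \<ge> 0" "measure M {p \<in> space M. S p > t} \<le> \<alpha>"
    "t > 0 \<Longrightarrow> measure M {p \<in> space M. S p > t} \<ge> \<alpha>"
proof -
  interpret prob_space M by (rule ps)
  let ?T = "{t. measure M {p \<in> space M. S p > t} \<le> \<alpha>}"
  let ?G = "\<lambda>s. {p \<in> space M. S p > s}"
  have Gs: "?G s \<in> sets M" for s using Sm by measurable
  have Gmono: "s \<le> s' \<Longrightarrow> measure M (?G s') \<le> measure M (?G s)" for s s'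
    by (intro finite_measure_mono) (use Gs in auto)
  have MxT: "Mx \<in> ?T"
  proof -
    have "?G Mx = {}" using bound by force
    then have "measure M (?G Mx) = 0" by (simp only: measure_empty)
    then show ?thesis using al by simp
  qed
  have Tge0: "s \<ge> 0" if "s \<in> ?T" for s
  proof (rule ccontr)
    assume "\<not> s \<ge> 0"
    then have "?G s = space M" using nonneg by force
    then show False using that al prob_space by simp
  qed
  have bdd: "bdd_below ?T" using Tge0 by (intro bdd_belowI[where m=0]) auto
  show t0: "t \<ge> 0" unfolding t using MxT Tge0 by (intro cInf_greatest) auto
  have upT: "t + e \<in> ?T" if epos: "e > 0" for e
  proof -
    have "\<exists>s\<in>?T. s < t + e"
      using cInf_lessD[of ?T "t + e"] MxT epos unfolding t by fastforce
    then obtain s where "s \<in> ?T" "s < t + e" by blast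
    then show ?thesis using Gmono[of s "t + e"] by auto
  qed
  have "(\<lambda>n. measure M (?G (t + 1 / Suc n))) \<longlonglongrightarrow> measure M (\<Union>n. ?G (t + 1 / Suc n))"
  proof (rule finite_Lim_measure_incseq)
    show "range (\<lambda>n. ?G (t + 1 / Suc n)) \<subseteq> sets M" using Gs by auto
    show "incseq (\<lambda>n. ?G (t + 1 / Suc n))"
    proof (rule incseq_SucI)
      fix n
      have "1 / real (Suc (Suc n)) \<le> 1 / Suc n" by (simp add: frac_le)
      then show "?G (t + 1 / Suc n) \<subseteq> ?G (t + 1 / Suc (Suc n))" by auto
    qed
  qed
  moreover have "(\<Union>n. ?G (t + 1 / Suc n)) = ?G t"
  proof
    show "(\<Union>n. ?G (t + 1 / Suc n)) \<subseteq> ?G t"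
    proof
      fix p assume "p \<in> (\<Union>n. ?G (t + 1 / Suc n))"
      then obtain n where n: "p \<in> ?G (t + 1 / Suc n)" by auto
      then have a: "S p > t + 1 / real (Suc n)" "p \<in> space M" by auto
      have "(0::real) < 1 / real (Suc n)" by simp
      then have "S p > t" using a(1) by linarith
      then show "p \<in> ?G t" using a by auto
    qed
    show "?G t \<subseteq> (\<Union>n. ?G (t + 1 / Suc n))"
    proof
      fix p assume p: "p \<in> ?G t"
      then obtain n where "1 / real (Suc n) < S p - t"
        using nat_approx_posE[of "S p - t"] by auto
      then have "S p > t + 1 / real (Suc n)" by linarith
      then show "p \<in> (\<Union>n. ?G (t + 1 / Suc n))" using p by blast
    qed
  qed
  ultimately have L: "(\<lambda>n. measure M (?G (t + 1 / Suc n))) \<longlonglongrightarrow> measure M (?G t)" by simp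
  show "measure M (?G t) \<le> \<alpha>"
    by (rule LIMSEQ_le_const2[OF L]) (use upT in auto)
  assume tpos: "t > 0"
  let ?H = "{p \<in> space M. S p \<ge> t}"
  have notT: "measure M (?G s) > \<alpha>" if "s < t" for s
  proof (rule ccontr)
    assume "\<not> measure M (?G s) > \<alpha>"
    then have "s \<in> ?T" by simp
    then have "t \<le> s" unfolding t using bdd by (rule cInf_lower)
    then show False using that by simp
  qed
  have "(\<lambda>n. measure M (?G (t - 1 / Suc n))) \<longlonglongrightarrow> measure M (\<Inter>n. ?G (t - 1 / Suc n))"
  proof (rule finite_Lim_measure_decseq)
    show "range (\<lambda>n. ?G (t - 1 / Suc n)) \<subseteq> sets M" using Gs by auto
    show "decseq (\<lambda>n. ?G (t - 1 / Suc n))"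
    proof (rule decseq_SucI)
      fix n
      have "1 / real (Suc (Suc n)) \<le> 1 / Suc n" by (simp add: frac_le)
      then show "?G (t - 1 / Suc (Suc n)) \<subseteq> ?G (t - 1 / Suc n)" by auto
    qed
  qed
  moreover have "(\<Inter>n. ?G (t - 1 / Suc n)) = ?H"
  proof
    show "?H \<subseteq> (\<Inter>n. ?G (t - 1 / Suc n))"
    proof
      fix p assume p: "p \<in> ?H"
      have "S p > t - 1 / real (Suc n)" for n
      proof -
        have "(0::real) < 1 / real (Suc n)" by simp
        moreover have "S p \<ge> t" using p by auto
        ultimately show ?thesis by linarith
      qed
      then show "p \<in> (\<Inter>n. ?G (t - 1 / Suc n))" using p by auto
    qed
    show "(\<Inter>n. ?G (t - 1 / Suc n)) \<subseteq> ?H"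
    proof
      fix p assume p: "p \<in> (\<Inter>n. ?G (t - 1 / Suc n))"
      have "S p \<ge> t"
      proof (rule ccontr)
        assume "\<not> S p \<ge> t"
        then obtain n where "1 / real (Suc n) < t - S p"
          using nat_approx_posE[of "t - S p"] by auto
        moreover have "S p > t - 1 / Suc n" using p by auto
        ultimately show False by simp
      qed
      then show "p \<in> ?H" using p by auto
    qed
  qed
  ultimately have L2: "(\<lambda>n. measure M (?G (t - 1 / Suc n))) \<longlonglongrightarrow> measure M ?H" by simp
  have Hge: "measure M ?H \<ge> \<alpha>"
  proof (rule LIMSEQ_le_const[OF L2], intro exI allI impI)
    fix n :: nat
    have "(0::real) < 1 / real (Suc n)" by simp
    then have "t - 1 / real (Suc n) < t" by linarith
    then show "\<alpha> \<le> measure M (?G (t - 1 / Suc n))" using notT by (intro less_imp_le) blast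
  qed
  have "?H = ?G t \<union> {p \<in> space M. S p = t}" by auto
  moreover have "measure M (?G t \<union> {p \<in> space M. S p = t}) = measure M (?G t) + measure M {p \<in> space M. S p = t}"
    by (rule finite_measure_Union) (use Sm in \<open>auto intro: Gs\<close>)
  ultimately show "measure M (?G t) \<ge> \<alpha>" using Hge nullc[OF tpos] by simp
qed


lemma sum_level_null:
  fixes a :: "nat \<Rightarrow> (nat \<Rightarrow> real) \<Rightarrow> real"
  assumes K: "K \<ge> 1" and am: "\<And>k. k \<in> {1..K} \<Longrightarrow> a k \<in> borel_measurable (cube K)"
    and a_decr: "\<And>k p j x. k \<in> {1..K} \<Longrightarrow> p \<in> cube_set K \<Longrightarrow> j \<in> {1..K} \<Longrightarrow>
        0 \<le> x \<Longrightarrow> x < p j \<Longrightarrow> a k (p(j := x)) > a k p"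
    and Bm: "\<And>k. k \<in> {1..K} \<Longrightarrow> Measurable.pred (cube K) (B k)"
    and c: "c > 0"
  shows "measure (cube K) {p \<in> space (cube K). (\<Sum>k\<in>{1..K}. a k p * of_bool (B k p)) = c} = 0"
proof -
  let ?N = "\<lambda>A. {p \<in> space (cube K). (\<Sum>k\<in>A. a k p) = c}"
  have N0: "?N A \<in> null_sets (cube K)" if A: "A \<in> Pow {1..K} - {{}}" for A
  proof -
    have fin: "finite A" and ne: "A \<noteq> {}" and sub: "A \<subseteq> {1..K}" using A finite_subset by auto
    have fm: "(\<lambda>p. \<Sum>k\<in>A. a k p) \<in> borel_measurable (cube K)"
      using am sub by (intro borel_measurable_sum) auto
    have "emeasure (cube K) (?N A) = 0"
    proof (rule level_null[OF K fm])
      fix p x assume "p \<in> cube_set K" "0 \<le> x" "x < p 1"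
      then show "(\<Sum>k\<in>A. a k p) < (\<Sum>k\<in>A. a k (p(1 := x)))"
        using a_decr sub K fin ne by (intro sum_strict_mono) auto
    qed
    moreover have "?N A \<in> sets (cube K)" using fm by measurable
    ultimately show ?thesis by auto
  qed
  have U: "(\<Union>A\<in>Pow {1..K} - {{}}. ?N A) \<in> null_sets (cube K)"
  proof (rule null_sets_UN')
    show "countable (Pow {1..K} - {{}})" by (intro countable_finite) auto
  qed (rule N0)
  let ?L = "{p \<in> space (cube K). (\<Sum>k\<in>{1..K}. a k p * of_bool (B k p)) = c}"
  have Lm: "?L \<in> sets (cube K)"
  proof -
    have "(\<lambda>p. \<Sum>k\<in>{1..K}. a k p * of_bool (B k p)) \<in> borel_measurable (cube K)"
      using am Bm by (intro borel_measurable_sum borel_measurable_times) auto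
    then show ?thesis by measurable
  qed
  have "?L \<subseteq> (\<Union>A\<in>Pow {1..K} - {{}}. ?N A)"
  proof
    fix p assume p: "p \<in> ?L"
    let ?A = "{k \<in> {1..K}. B k p}"
    have "(\<Sum>k\<in>{1..K}. a k p * of_bool (B k p)) = (\<Sum>k\<in>?A. a k p)"
      by (subst sum.inter_filter) (auto intro!: sum.cong simp: of_bool_def)
    then have eq: "(\<Sum>k\<in>?A. a k p) = c" using p by simp
    have "?A \<noteq> {}"
    proof
      assume e: "?A = {}"
      have "(\<Sum>k\<in>?A. a k p) = 0" by (simp only: e sum.empty)
      then show False using eq c by simp
    qed
    moreover have "p \<in> ?N ?A" using eq p by simp
    moreover have "?A \<in> Pow {1..K}" by auto
    ultimately show "p \<in> (\<Union>A\<in>Pow {1..K} - {{}}. ?N A)" by (intro UN_I[of ?A]) simp_all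
  qed
  then have "?L \<in> null_sets (cube K)" by (rule null_sets_subset[OF U Lm])
  then show ?thesis by (simp add: measure_def null_sets_def)
qed


lemma integral_of_bool:
  assumes "Measurable.pred M \<psi>"
  shows "(\<integral>p. (of_bool (\<psi> p) :: real) \<partial>M) = measure M {p \<in> space M. \<psi> p}"
proof -
  have "(\<integral>p. (of_bool (\<psi> p) :: real) \<partial>M) = (\<integral>p. indicator {p \<in> space M. \<psi> p} p \<partial>M)"
    by (rule Bochner_Integration.integral_cong) (auto simp: indicator_def)
  also have "\<dots> = measure M {p \<in> space M. \<psi> p}" by (simp add: Int_absorb2)
  finally show ?thesis .
qed

theorem theorem3p1:
  fixes K :: nat and \<alpha> :: real
    and \<Theta> :: "'t set" and P :: "'t \<Rightarrow> (nat \<Rightarrow> real) measure" and null :: "nat \<Rightarrow> 't \<Rightarrow> bool"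
    and a :: "nat \<Rightarrow> (nat \<Rightarrow> real) \<Rightarrow> real"
    and \<phi> :: "nat set \<Rightarrow> (nat \<Rightarrow> real) \<Rightarrow> bool"
  assumes K: "K \<ge> 1"
    and alpha: "0 < \<alpha>" "\<alpha> < 1"
    and model_prob: "\<And>\<theta>. \<theta> \<in> \<Theta> \<Longrightarrow> prob_space (P \<theta>) \<and> sets (P \<theta>) = sets (cube K)"
    and model_unif: "\<And>\<theta> k. \<theta> \<in> \<Theta> \<Longrightarrow> k \<in> {1..K} \<Longrightarrow> null k \<theta> \<Longrightarrow>
        distr (P \<theta>) borel (\<lambda>p. p k) = uniform_measure lborel {0..1::real}"
    and model_indep: "\<And>\<theta>. \<theta> \<in> \<Theta> \<Longrightarrow>
        prob_space.indep_vars (P \<theta>) (\<lambda>_. borel) (\<lambda>k p. p k) {1..K}"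
    and model_alt: "\<And>k. k \<in> {1..K} \<Longrightarrow> \<exists>\<theta>s :: nat \<Rightarrow> 't.
        (\<forall>n. \<theta>s n \<in> \<Theta> \<and> \<not> null k (\<theta>s n)) \<and>
        (\<forall>\<epsilon>>0. (\<lambda>n. measure (P (\<theta>s n)) {p \<in> space (P (\<theta>s n)). p k < \<epsilon>}) \<longlonglongrightarrow> 1)"
    and complete_null: "\<exists>\<theta>\<in>\<Theta>. \<forall>k\<in>{1..K}. null k \<theta>"
    and a_cont: "\<And>k. k \<in> {1..K} \<Longrightarrow> continuous_on (cube_set K) (a k)"
    and a_decr: "\<And>k p j x. k \<in> {1..K} \<Longrightarrow> p \<in> cube_set K \<Longrightarrow> j \<in> {1..K} \<Longrightarrow>
        0 \<le> x \<Longrightarrow> x < p j \<Longrightarrow> a k (p(j := x)) > a k p"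
    and a_nonneg: "\<And>k p. k \<in> {1..K} \<Longrightarrow> p \<in> cube_set K \<Longrightarrow> 0 \<le> a k p"
    and phi_meas: "\<And>I. I \<noteq> {} \<Longrightarrow> I \<subseteq> {1..K} \<Longrightarrow> Measurable.pred (cube K) (\<phi> I)"
    and phi_valid: "\<And>I. I \<noteq> {} \<Longrightarrow> I \<subseteq> {1..K} \<Longrightarrow> valid_test \<Theta> P null \<alpha> I (\<phi> I)"
    and phi_single: "\<And>k p. k \<in> {1..K} \<Longrightarrow> \<phi> {k} p = (p k \<le> \<alpha>)"
  shows "Measurable.pred (cube K) (phi_tilde K a \<phi> \<alpha>)
       \<and> valid_test \<Theta> P null \<alpha> {1..K} (phi_tilde K a \<phi> \<alpha>)
       \<and> (\<forall>\<psi>. Measurable.pred (cube K) \<psi> \<and> valid_test \<Theta> P null \<alpha> {1..K} \<psi> \<longrightarrow>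
             power_obj K a (proc_with K \<phi> (phi_tilde K a \<phi> \<alpha>)) \<ge> power_obj K a (proc_with K \<phi> \<psi>))
       \<and> power_obj K a (proc_with K \<phi> (phi_tilde K a \<phi> \<alpha>)) \<ge> power_obj K a (closed_testing K \<phi>)
       \<and> ((\<forall>I. I \<noteq> {} \<and> I \<subseteq> {1..K} \<longrightarrow> mono_test K (\<phi> I)) \<longrightarrow>
            mono_test K (phi_tilde K a \<phi> \<alpha>) \<and> mono_proc K (proc_with K \<phi> (phi_tilde K a \<phi> \<alpha>)))"
proof -
  let ?C = "cube K"
  define B where "B k p = (\<forall>I\<in>proper_sets_containing K k. \<phi> I p)" for k p
  define S where "S = stat_S K a \<phi>"
  define t where "t = thr_K K a \<phi> \<alpha>"
  have S_eq: "S p = (\<Sum>k\<in>{1..K}. a k p * of_bool (B k p))" for p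
    unfolding S_def stat_S_def B_def ..
  have pt_eq: "phi_tilde K a \<phi> \<alpha> p = (S p > t)" for p
    unfolding phi_tilde_def S_def t_def ..
  have spC: "space ?C = cube_set K" by (rule space_cube)
  have Peq: "P \<theta> = ?C" if "\<theta> \<in> \<Theta>" "\<forall>k\<in>{1..K}. null k \<theta>" for \<theta>
    using that model_prob model_unif model_indep K by (intro model_eq_cube) auto
  obtain \<theta>0 where th0: "\<theta>0 \<in> \<Theta>" "\<forall>k\<in>{1..K}. null k \<theta>0" using complete_null by blast
  have psC: "prob_space ?C" using Peq[OF th0] model_prob[OF th0(1)] by simp
  interpret C: prob_space ?C by (rule psC)
  have am: "a k \<in> borel_measurable ?C" if "k \<in> {1..K}" for k
    using a_cont[OF that] by (rule cont_meas)
  have Bm: "Measurable.pred ?C (B k)" if "k \<in> {1..K}" for k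
  proof -
    have fin: "finite (proper_sets_containing K k)"
      by (rule finite_subset[of _ "Pow {1..K}"]) (auto simp: proper_sets_containing_def)
    show ?thesis unfolding B_def
      by (rule pred_intros_finite(3)[OF fin], rule phi_meas) (auto simp: proper_sets_containing_def)
  qed
  have Sm: "S \<in> borel_measurable ?C"
    unfolding S_eq[abs_def] using am Bm by (intro borel_measurable_sum borel_measurable_times) auto
  have ptm: "Measurable.pred ?C (phi_tilde K a \<phi> \<alpha>)"
    unfolding pt_eq using Sm by measurable
  define z where "z = (\<lambda>i\<in>{1..K}. 0::real)"
  have zC: "z \<in> cube_set K" by (auto simp: z_def cube_set_def)
  have a_anti: "a k q \<ge> a k p" if "k \<in> {1..K}" "p \<in> cube_set K" "q \<in> cube_set K" "\<forall>j\<in>{1..K}. q j \<le> p j" for k p q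
    by (rule antitone_coord[of K "a k"]) (use that a_decr in auto)
  define Mx where "Mx = (\<Sum>k\<in>{1..K}. a k z)"
  have S_nonneg: "0 \<le> S p" if "p \<in> space ?C" for p
    unfolding S_eq using that a_nonneg spC by (intro sum_nonneg) auto
  have S_bound: "S p \<le> Mx" if "p \<in> space ?C" for p
  proof -
    have "S p \<le> (\<Sum>k\<in>{1..K}. a k z)" unfolding S_eq
    proof (rule sum_mono)
      fix k assume k: "k \<in> {1..K}"
      have p: "p \<in> cube_set K" using that spC by simp
      have le: "\<forall>j\<in>{1..K}. z j \<le> p j" using p by (auto simp: z_def cube_set_def PiE_iff)
      show "a k p * of_bool (B k p) \<le> a k z"
        using a_anti[OF k p zC le] a_nonneg[OF k p] by (cases "B k p") auto
    qed
    then show ?thesis unfolding Mx_def .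
  qed
  have nullc: "measure ?C {p \<in> space ?C. S p = c} = 0" if "c > 0" for c
    unfolding S_eq by (rule sum_level_null[where a=a and B=B, OF K am a_decr Bm that])
  have tdef: "t = Inf {t. measure ?C {p \<in> space ?C. S p > t} \<le> \<alpha>}"
    unfolding t_def thr_K_def S_def ..
  note TF = thr_facts[OF psC Sm S_nonneg S_bound alpha nullc tdef]
  have tnn: "t \<ge> 0" by (rule TF(1))
  have ptset: "{p \<in> space ?C. phi_tilde K a \<phi> \<alpha> p} = {p \<in> space ?C. S p > t}"
    using pt_eq by auto
  have valid_pt: "valid_test \<Theta> P null \<alpha> {1..K} (phi_tilde K a \<phi> \<alpha>)"
    unfolding valid_test_def
  proof (intro ballI impI)
    fix \<theta> assume "\<theta> \<in> \<Theta>" "\<forall>i\<in>{1..K}. null i \<theta>"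
    then have "P \<theta> = ?C" by (rule Peq)
    then show "measure (P \<theta>) {p \<in> space (P \<theta>). phi_tilde K a \<phi> \<alpha> p} \<le> \<alpha>"
      using TF(2) ptset by simp
  qed
  have pow_eq: "power_obj K a (proc_with K \<phi> \<psi>) = (\<integral>p. S p * of_bool (\<psi> p) \<partial>?C)" for \<psi>
    unfolding power_obj_def
  proof (rule Bochner_Integration.integral_cong[OF refl])
    fix p
    show "(\<Sum>k\<in>{1..K}. a k p * of_bool (proc_with K \<phi> \<psi> k p)) = S p * of_bool (\<psi> p)"
      unfolding S_eq proc_with_def B_def by (cases "\<psi> p") auto
  qed
  have intg: "integrable ?C (\<lambda>p. S p * of_bool (\<psi> p))" if "Measurable.pred ?C \<psi>" for \<psi>
  proof (rule C.integrable_const_bound[where B=Mx])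
    show "AE p in ?C. norm (S p * of_bool (\<psi> p)) \<le> Mx"
      using S_nonneg S_bound by (intro AE_I2) (force simp: of_bool_def)
    show "(\<lambda>p. S p * of_bool (\<psi> p)) \<in> borel_measurable ?C"
      using Sm that by measurable
  qed
  have opt: "power_obj K a (proc_with K \<phi> (phi_tilde K a \<phi> \<alpha>)) \<ge> power_obj K a (proc_with K \<phi> \<psi>)"
    if psm: "Measurable.pred ?C \<psi>" and psv: "valid_test \<Theta> P null \<alpha> {1..K} \<psi>" for \<psi>
  proof -
    let ?pt = "phi_tilde K a \<phi> \<alpha>"
    have mpsi: "measure ?C {p \<in> space ?C. \<psi> p} \<le> \<alpha>"
      using psv th0 Peq[OF th0] unfolding valid_test_def by force
    have mpt: "measure ?C {p \<in> space ?C. ?pt p} = measure ?C {p \<in> space ?C. S p > t}"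
      using ptset by simp
    have ib: "integrable ?C (\<lambda>p. of_bool (f p) :: real)" if "Measurable.pred ?C f" for f
      by (rule C.integrable_const_bound[where B=1]) (use that in \<open>auto simp: of_bool_def\<close>)
    have "(\<integral>p. t * of_bool (?pt p) - t * of_bool (\<psi> p) \<partial>?C)
        \<le> (\<integral>p. S p * of_bool (?pt p) - S p * of_bool (\<psi> p) \<partial>?C)"
    proof (rule integral_mono)
      show "integrable ?C (\<lambda>p. t * of_bool (?pt p) - t * of_bool (\<psi> p))"
        using ib[OF ptm] ib[OF psm] by auto
      show "integrable ?C (\<lambda>p. S p * of_bool (?pt p) - S p * of_bool (\<psi> p))"
        using intg[OF ptm] intg[OF psm] by auto
      fix p
      show "t * of_bool (?pt p) - t * of_bool (\<psi> p) \<le> S p * of_bool (?pt p) - S p * of_bool (\<psi> p)"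
        unfolding pt_eq by (cases "\<psi> p"; cases "S p > t") auto
    qed
    also have "\<dots> = power_obj K a (proc_with K \<phi> ?pt) - power_obj K a (proc_with K \<phi> \<psi>)"
      unfolding pow_eq using intg[OF ptm] intg[OF psm] by (rule Bochner_Integration.integral_diff)
    finally have ineq: "t * measure ?C {p \<in> space ?C. S p > t} - t * measure ?C {p \<in> space ?C. \<psi> p}
        \<le> power_obj K a (proc_with K \<phi> ?pt) - power_obj K a (proc_with K \<phi> \<psi>)"
      using ib[OF ptm] ib[OF psm] integral_of_bool[OF ptm] integral_of_bool[OF psm] mpt
      by (simp add: Bochner_Integration.integral_diff)
    have "t * measure ?C {p \<in> space ?C. S p > t} - t * measure ?C {p \<in> space ?C. \<psi> p} \<ge> 0"
    proof (cases "t = 0")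
      case False
      then have "t > 0" using tnn by simp
      then have "measure ?C {p \<in> space ?C. S p > t} \<ge> \<alpha>" using TF by simp
      then have "measure ?C {p \<in> space ?C. S p > t} \<ge> measure ?C {p \<in> space ?C. \<psi> p}"
        using mpsi by simp
      then show ?thesis using tnn by (simp add: right_diff_distrib[symmetric])
    qed simp
    then show ?thesis using ineq by simp
  qed
  have ct: "power_obj K a (closed_testing K \<phi>) = power_obj K a (proc_with K \<phi> (\<phi> {1..K}))"
    unfolding power_obj_def
  proof (rule Bochner_Integration.integral_cong[OF refl], rule sum.cong[OF refl])
    fix p k assume k: "k \<in> {1..K}"
    have "closed_testing K \<phi> k p = proc_with K \<phi> (\<phi> {1..K}) k p"
      unfolding closed_testing_def proc_with_def proper_sets_containing_def using k by blast
    then show "a k p * of_bool (closed_testing K \<phi> k p) = a k p * of_bool (proc_with K \<phi> (\<phi> {1..K}) k p)"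
      by simp
  qed
  have ne: "{1..K} \<noteq> {}" using K by auto
  have ctle: "power_obj K a (proc_with K \<phi> (phi_tilde K a \<phi> \<alpha>)) \<ge> power_obj K a (closed_testing K \<phi>)"
    unfolding ct by (rule opt) (use phi_meas[OF ne] phi_valid[OF ne] in auto)
  have mono: "mono_test K (phi_tilde K a \<phi> \<alpha>) \<and> mono_proc K (proc_with K \<phi> (phi_tilde K a \<phi> \<alpha>))"
    if mt: "\<forall>I. I \<noteq> {} \<and> I \<subseteq> {1..K} \<longrightarrow> mono_test K (\<phi> I)"
  proof -
    have Bmono: "B k q" if "k \<in> {1..K}" "p \<in> cube_set K" "q \<in> cube_set K" "\<forall>j\<in>{1..K}. q j \<le> p j" "B k p" for k p q
      unfolding B_def
    proof
      fix I assume I: "I \<in> proper_sets_containing K k"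
      then have "I \<noteq> {}" "I \<subseteq> {1..K}" by (auto simp: proper_sets_containing_def)
      then have "mono_test K (\<phi> I)" using mt by blast
      then show "\<phi> I q" using that I unfolding mono_test_def B_def by blast
    qed
    have Smono: "S q \<ge> S p" if "p \<in> cube_set K" "q \<in> cube_set K" "\<forall>j\<in>{1..K}. q j \<le> p j" for p q
      unfolding S_eq
    proof (rule sum_mono)
      fix k assume k: "k \<in> {1..K}"
      show "a k p * of_bool (B k p) \<le> a k q * of_bool (B k q)"
        using a_anti[OF k that] Bmono[OF k that] a_nonneg[OF k that(1)] a_nonneg[OF k that(2)]
        by (cases "B k p"; cases "B k q") auto
    qed
    have "mono_test K (phi_tilde K a \<phi> \<alpha>)"
      unfolding mono_test_def
    proof (intro ballI impI)
      fix p q assume pq: "p \<in> cube_set K" "q \<in> cube_set K" "\<forall>k\<in>{1..K}. q k \<le> p k"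
        and "phi_tilde K a \<phi> \<alpha> p"
      then have "S p > t" by (simp add: pt_eq)
      then show "phi_tilde K a \<phi> \<alpha> q" using Smono[OF pq] by (simp add: pt_eq)
    qed
    moreover have "mono_proc K (proc_with K \<phi> (phi_tilde K a \<phi> \<alpha>))"
      unfolding mono_proc_def
    proof (intro ballI impI)
      fix p q k assume pq: "p \<in> cube_set K" "q \<in> cube_set K" "\<forall>k\<in>{1..K}. q k \<le> p k"
        and k: "k \<in> {1..K}" and pw: "proc_with K \<phi> (phi_tilde K a \<phi> \<alpha>) k p"
      then have "S p > t" "B k p" by (simp_all add: pt_eq proc_with_def B_def)
      then have "S q > t" "B k q" using Smono[OF pq] Bmono[OF k pq] by auto
      then show "proc_with K \<phi> (phi_tilde K a \<phi> \<alpha>) k q" by (simp add: pt_eq proc_with_def B_def)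
    qed
    ultimately show ?thesis ..
  qed
  show ?thesis
  proof (intro conjI allI impI)
    fix \<psi> assume "Measurable.pred ?C \<psi> \<and> valid_test \<Theta> P null \<alpha> {1..K} \<psi>"
    then show "power_obj K a (proc_with K \<phi> (phi_tilde K a \<phi> \<alpha>)) \<ge> power_obj K a (proc_with K \<phi> \<psi>)"
      using opt by blast
  qed (use ptm valid_pt ctle mono in auto)
qed

end
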